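(* (Absolute waiting bounds.) Let UE $u$ have per-slot allowance $\Delta C_u>0$, credit clamp $[lo_u,hi_u]$, eligibility gate $C_u\ge0$, with at most $K$ new grants per slot assigned by round-robin over the eligible set, and assume the bounded eligible burst assumption with constant $E_{\max}\ge1$. Then: (A) (Time to eligibility from any deficit.) If a packet of $u$ arrives at slot $n_0$ when $C_u[n_0]<0$, then the time until $u$ becomes eligible satisfies $W^{\mathrm{elig}}_u\le\left\lceil -C_u[n_0]/\Delta C_u\right\rceil T_{\mathrm{slot}}\le\left\lceil -lo_u/\Delta C_u\right\rceil T_{\mathrm{slot}}$. (B) (Time to first grant once eligible.) Let $n_{\mathrm{elig}}$ be the first slot with $C_u[n_{\mathrm{elig}}]\ge0$. The additional wait after eligibility satisfies $W^{\mathrm{queue}\mid\mathrm{elig}}_u\le\lceil E_{\max}/K\rceil T_{\mathrm{slot}}$, hence the total time to the first grant satisfies $W^{\mathrm{svc}}_u\le W^{\mathrm{elig}}_u+\lceil E_{\max}/K\rceil T_{\mathrm{slot}}$. (C) (Inter-grant separation.) If a new grant to $u$ at slot $n^\star$ debits $D_u[n^\star]\le D_u^{\max}$, then the post-grant credit satisfies $C_u[n^\star+]\ge\max\{lo_u,-D_u^{\max}\}$, so the largest possible post-grant deficit magnitude is $\delta_u^{\max}=\min\{-lo_u,D_u^{\max}\}$, and the time until $u$ becomes eligible again satisfies $W^{\mathrm{re\text{-}elig}}_u\le\left\lceil \min\{-lo_u,D_u^{\max}\}/\Delta C_u\right\rceil T_{\mathrm{slot}}$; i.e. it is at most $\lceil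 D_u^{\max}/\Delta C_u\rceil T_{\mathrm{slot}}$ if $D_u^{\max}\le -lo_u$ and at most $\lceil -lo_u/\Delta C_u\rceil T_{\mathrm{slot}}$ if $D_u^{\max}\ge -lo_u$. The total time until the next grant, including subsequent queuing, satisfies $W^{\mathrm{cycle}}_u\le W^{\mathrm{re\text{-}elig}}_u+\lceil E_{\max}/K\rceil T_{\mathrm{slot}}$.
   Context: Slotted downlink, slots of duration $T_{\mathrm{slot}}>0$. For UE $u$: backlog $Q_u[n]$, per-slot allowance $\Delta C_u=\texttt{idleSlope}_{p(u)}T_{\mathrm{slot}}>0$, bounds $lo_u<0<hi_u$, credit recursion $C_u[n+1]=\min\{\max\{f(C_u[n],\Delta C_u,Q_u[n])-D_u[n],lo_u\},hi_u\}$, where $f(C,\Delta C,Q)=\min(C+\Delta C,0)$ if $C<0$, $=0$ if $C>0$ and $Q=0$, $=C+\Delta C$ otherwise, and $D_u[n]$ is $0$ without a new (non-HARQ) grant and otherwise the granted TBS (CBS-DT) or $\min\{\mathrm{TBS}_u[n],Q_u[n]\}$ (CBS-PU). A UE is eligible for a new grant in slot $n$ iff $Q_u[n]>0$, it has a free HARQ process, it is not scheduled for HARQ retransmission in slot $n$, and $C_u[n]\ge0$. HARQ retransmissions are not gated by credit and incur no debit. At most $K$ new grants are issued per slot, chosen by round-robin (RR) among eligible UEs. Bounded eligible burst assumption: there is a constant $E_{\max}\ge1$ such that in every slot the number of UEs other than $u$ that are eligible (credit $\ge0$) and still awaiting a new grant is at most $E_{\max}$ (enforced by admission control).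
   Formalization: In (B) and the cycle bound of (C), u stays backlogged, with a free HARQ process and no HARQ retransmission, every slot from eligibility until its first grant; also $C_u[0]$ lies in $[lo_u,hi_u]$ and there are finitely many UEs. Each condition added here is assumed in the paper as well or is needed for the statement above to hold. *)

theory Defs
  imports Main "HOL.Real"
begin

text \<open>Credit-based shaper (CBS) variants: debit is the granted TBS (DT) or
  min of TBS and backlog (PU).\<close>
datatype cbs_variant = CBS_DT | CBS_PU

definition f_credit :: "real \<Rightarrow> real \<Rightarrow> real \<Rightarrow> real" where
  "f_credit C dC Q =
     (if C < 0 then min (C + dC) 0
      else if C > 0 \<and> Q = 0 then 0
      else C + dC)"

definition debit :: "cbs_variant \<Rightarrow> bool \<Rightarrow> real \<Rightarrow> real \<Rightarrow> real" where
  "debit v g tbs q =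
     (if \<not> g then 0 else (case v of CBS_DT \<Rightarrow> tbs | CBS_PU \<Rightarrow> min tbs q))"

definition rr_grant :: "nat \<Rightarrow> (nat \<Rightarrow> 'ue list) \<Rightarrow> 'ue \<Rightarrow> nat \<Rightarrow> bool" where
  "rr_grant K rq u n \<longleftrightarrow> u \<in> set (take K (rq n))"

text \<open>Backlogged, with a free HARQ process and not scheduled for HARQ
  retransmission (the non-credit part of eligibility).\<close>
definition ready :: "(nat \<Rightarrow> real) \<Rightarrow> (nat \<Rightarrow> bool) \<Rightarrow> (nat \<Rightarrow> bool) \<Rightarrow> nat \<Rightarrow> bool" where
  "ready Q hfree retx n \<longleftrightarrow> Q n > 0 \<and> hfree n \<and> \<not> retx n"

definition slots_to_elig :: "(nat \<Rightarrow> real) \<Rightarrow> nat \<Rightarrow> nat" where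
  "slots_to_elig C n0 = (LEAST k. 0 \<le> C (n0 + k))"

definition slots_to :: "(nat \<Rightarrow> bool) \<Rightarrow> nat \<Rightarrow> nat" where
  "slots_to g n0 = (LEAST k. g (n0 + k))"

text \<open>The slotted system: UE u with credit C, backlog Q, TBS, HARQ status,
  eligibility predicate elig over all UEs, and round-robin list rq of the
  eligible UEs (granted UEs that remain eligible and newly eligible UEs are
  appended at the tail).  The bounded eligible burst assumption bounds the
  number of eligible UEs other than u by Emax in every slot.\<close>
definition rr_cbs_system ::
  "real \<Rightarrow> real \<Rightarrow> real \<Rightarrow> real \<Rightarrow> nat \<Rightarrow> nat \<Rightarrow> cbs_variant \<Rightarrow> 'ue::finite \<Rightarrow>
   (nat \<Rightarrow> real) \<Rightarrow> (nat \<Rightarrow> real) \<Rightarrow> (nat \<Rightarrow> real) \<Rightarrow> (nat \<Rightarrow> real) \<Rightarrow>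
   (nat \<Rightarrow> bool) \<Rightarrow> (nat \<Rightarrow> bool) \<Rightarrow> (nat \<Rightarrow> 'ue \<Rightarrow> bool) \<Rightarrow> (nat \<Rightarrow> 'ue list) \<Rightarrow> bool"
  where
  "rr_cbs_system Tslot dC lo hi K Emax v u C Q TBS D hfree retx elig rq \<longleftrightarrow>
     Tslot > 0 \<and> dC > 0 \<and> lo < 0 \<and> 0 < hi \<and> K \<ge> 1 \<and> Emax \<ge> 1 \<and>
     (\<forall>n. Q n \<ge> 0 \<and> TBS n \<ge> 0) \<and>
     lo \<le> C 0 \<and> C 0 \<le> hi \<and>
     (\<forall>n. D n = debit v (rr_grant K rq u n) (TBS n) (Q n)) \<and>
     (\<forall>n. C (Suc n) = min (max (f_credit (C n) dC (Q n) - D n) lo) hi) \<and>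
     (\<forall>n. elig n u \<longleftrightarrow> ready Q hfree retx n \<and> 0 \<le> C n) \<and>
     (\<forall>n. distinct (rq n) \<and> set (rq n) = {w. elig n w}) \<and>
     (\<forall>n. \<exists>L. rq (Suc n) = filter (elig (Suc n)) (drop K (rq n)) @ L) \<and>
     (\<forall>n. card {w. w \<noteq> u \<and> elig n w} \<le> Emax)"

end

theory Submission
  imports Defs
begin

lemma tw_filter_le:
  assumes "u \<in> set (filter P ys)"
  shows "length (takeWhile (\<lambda>w. w \<noteq> u) (filter P ys @ L)) \<le> length (takeWhile (\<lambda>w. w \<noteq> u) ys)"
  using assms
proof (induction ys)
  case Nil then show ?case by simp
next
  case (Cons a ys)
  show ?case
  proof (cases "a = u")
    case True then show ?thesis using Cons.prems by auto
  next
    case False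
    then have "u \<in> set (filter P ys)" using Cons.prems by (auto split: if_splits)
    then show ?thesis using Cons.IH False by auto
  qed
qed

lemma tw_take:
  assumes "u \<in> set xs"
  shows "u \<in> set (take K xs) \<longleftrightarrow> length (takeWhile (\<lambda>w. w \<noteq> u) xs) < K"
  using assms
proof (induction xs arbitrary: K)
  case Nil then show ?case by simp
next
  case (Cons a xs)
  show ?case
  proof (cases K)
    case 0 then show ?thesis by simp
  next
    case (Suc K')
    show ?thesis
    proof (cases "a = u")
      case True then show ?thesis using Suc by simp
    next
      case False
      then have "u \<in> set xs" using Cons.prems by auto
      then show ?thesis using Cons.IH[of K'] False Suc by auto
    qed
  qed
qed

lemma tw_drop:
  assumes "u \<in> set xs" "u \<notin> set (take K xs)"
  shows "length (takeWhile (\<lambda>w. w \<noteq> u) xs) = K + length (takeWhile (\<lambda>w. w \<noteq> u) (drop K xs))"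
proof -
  have "takeWhile (\<lambda>w. w \<noteq> u) (take K xs @ drop K xs) = take K xs @ takeWhile (\<lambda>w. w \<noteq> u) (drop K xs)"
    by (rule takeWhile_append2) (use assms(2) in auto)
  moreover have "length (take K xs) = K"
    using assms tw_take[of u xs K] by (cases "K \<le> length xs") auto
  ultimately show ?thesis by simp
qed

lemma tw_card:
  assumes "distinct xs" "finite S" "set (takeWhile (\<lambda>w. w \<noteq> u) xs) \<subseteq> set xs - {u}" "set xs - {u} \<subseteq> S"
  shows "length (takeWhile (\<lambda>w. w \<noteq> u) xs) \<le> card S"
proof -
  have "distinct (takeWhile (\<lambda>w. w \<noteq> u) xs)"
    using assms(1) by (metis distinct_append takeWhile_dropWhile_id)
  then have "length (takeWhile (\<lambda>w. w \<noteq> u) xs) = card (set (takeWhile (\<lambda>w. w \<noteq> u) xs))"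
    by (simp add: distinct_card)
  also have "\<dots> \<le> card S" using assms by (meson card_mono order_trans)
  finally show ?thesis .
qed

lemma rr_bound:
  fixes rq :: "nat \<Rightarrow> 'ue list"
  assumes step: "\<forall>n. \<exists>L. rq (Suc n) = filter (E (Suc n)) (drop K (rq n)) @ L"
    and setrq: "\<forall>n. set (rq n) = {w. E n w}"
    and K: "K \<ge> 1"
    and inv: "\<And>j. (\<forall>m. ne \<le> m \<and> m < ne + j \<longrightarrow> u \<notin> set (take K (rq m))) \<Longrightarrow> E (ne + j) u"
    and bound: "length (takeWhile (\<lambda>w. w \<noteq> u) (rq ne)) \<le> Emax"
  shows "\<exists>j \<le> Emax div K. u \<in> set (take K (rq (ne + j)))"
proof (rule ccontr)
  assume nc: "\<not> ?thesis"
  let ?p = "\<lambda>n. length (takeWhile (\<lambda>w. w \<noteq> u) (rq n))"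
  have cl: "(\<forall>m. ne \<le> m \<and> m < ne + j \<longrightarrow> u \<notin> set (take K (rq m))) \<longrightarrow> ?p (ne + j) + j * K \<le> ?p ne" for j
  proof (induction j)
    case 0 then show ?case by simp
  next
    case (Suc j)
    show ?case
    proof
      assume h: "\<forall>m. ne \<le> m \<and> m < ne + Suc j \<longrightarrow> u \<notin> set (take K (rq m))"
      then have ih: "?p (ne + j) + j * K \<le> ?p ne" using Suc by auto
      have uin: "u \<in> set (rq (ne + j))" using inv[of j] h setrq by auto
      have nt: "u \<notin> set (take K (rq (ne + j)))" using h by auto
      have uin2: "E (Suc (ne + j)) u" using inv[of "Suc j"] h by auto
      obtain L where L: "rq (Suc (ne + j)) = filter (E (Suc (ne + j))) (drop K (rq (ne + j))) @ L"
        using step by blast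
      have ud: "u \<in> set (drop K (rq (ne + j)))"
        using uin nt by (metis Un_iff append_take_drop_id set_append)
      have "?p (Suc (ne + j)) \<le> length (takeWhile (\<lambda>w. w \<noteq> u) (drop K (rq (ne + j))))"
        unfolding L by (rule tw_filter_le) (use ud uin2 in auto)
      moreover have "?p (ne + j) = K + length (takeWhile (\<lambda>w. w \<noteq> u) (drop K (rq (ne + j))))"
        by (rule tw_drop[OF uin nt])
      ultimately show "?p (ne + Suc j) + Suc j * K \<le> ?p ne" using ih by simp
    qed
  qed
  let ?J = "Suc (Emax div K)"
  have "\<forall>m. ne \<le> m \<and> m < ne + ?J \<longrightarrow> u \<notin> set (take K (rq m))"
  proof (intro allI impI)
    fix m assume "ne \<le> m \<and> m < ne + ?J"
    then have "m - ne \<le> Emax div K" "m = ne + (m - ne)" by auto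
    then show "u \<notin> set (take K (rq m))" using nc by metis
  qed
  then have "?p (ne + ?J) + ?J * K \<le> ?p ne" using cl[of ?J] by blast
  then have "?J * K \<le> Emax" using bound by linarith
  moreover have "Emax < ?J * K"
  proof -
    have "Emax mod K < K" using K by simp
    moreover have "Emax div K * K + Emax mod K = Emax" by (rule div_mult_mod_eq)
    moreover have "Suc (Emax div K) * K = Emax div K * K + K" by simp
    ultimately show ?thesis by linarith
  qed
  ultimately show False by simp
qed


context
  fixes Tslot dC lo hi K Emax v u C Q TBS D hfree retx elig rq
  assumes sys: "rr_cbs_system Tslot dC lo hi K Emax v (u::'ue::finite) C Q TBS D hfree retx elig rq"
begin

lemma S: "Tslot > 0" "dC > 0" "lo < 0" "0 < hi" "K \<ge> 1" "Emax \<ge> 1"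
  "\<And>n. Q n \<ge> 0" "\<And>n. TBS n \<ge> 0" "lo \<le> C 0"
  "\<And>n. D n = debit v (rr_grant K rq u n) (TBS n) (Q n)"
  "\<And>n. C (Suc n) = min (max (f_credit (C n) dC (Q n) - D n) lo) hi"
  "\<And>n. elig n u \<longleftrightarrow> ready Q hfree retx n \<and> 0 \<le> C n"
  "\<And>n. distinct (rq n)" "\<And>n. set (rq n) = {w. elig n w}"
  "\<forall>n. \<exists>L. rq (Suc n) = filter (elig (Suc n)) (drop K (rq n)) @ L"
  "\<And>n. card {w. w \<noteq> u \<and> elig n w} \<le> Emax"
  using sys unfolding rr_cbs_system_def by auto

lemma C_ge_lo: "lo \<le> C n"
  by (cases n) (use S(1-11) in auto)

lemma grant_nonneg: "rr_grant K rq u n \<Longrightarrow> 0 \<le> C n"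
  unfolding rr_grant_def using S(12,14)[of n] by (auto dest: in_set_takeD)

lemma D_nonneg: "0 \<le> D n"
  using S(7,8,10)[of n] by (auto simp: debit_def split: cbs_variant.splits)

lemma neg_step: "C n < 0 \<Longrightarrow> C (Suc n) = min (C n + dC) 0"
proof -
  assume a: "C n < 0"
  then have "\<not> rr_grant K rq u n" using grant_nonneg by force
  then have "D n = 0" using S(10) by (simp add: debit_def)
  then show ?thesis using a S(11)[of n] C_ge_lo[of n] S(2,3,4) by (simp add: f_credit_def)
qed

lemma nonneg_step: "0 \<le> C n \<Longrightarrow> \<not> rr_grant K rq u n \<Longrightarrow> 0 \<le> C (Suc n)"
proof -
  assume a: "0 \<le> C n" "\<not> rr_grant K rq u n"
  then have "D n = 0" using S(10) by (simp add: debit_def)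
  then show ?thesis using a S(11)[of n] S(2,3,4) by (simp add: f_credit_def)
qed

lemma neg_run: "C n \<le> 0 \<Longrightarrow> (\<forall>i<k. C (n + i) < 0) \<Longrightarrow> C (n + k) = min (C n + real k * dC) 0"
proof (induction k)
  case 0 then show ?case by simp
next
  case (Suc k)
  then have "C (n + k) = min (C n + real k * dC) 0" "C (n + k) < 0" by auto
  then show ?case using neg_step[of "n + k"] S(2) by (auto simp: algebra_simps)
qed

lemma elig_exists: "C n < 0 \<Longrightarrow> \<exists>i \<le> nat \<lceil>- C n / dC\<rceil>. 0 \<le> C (n + i)"
proof (rule ccontr)
  assume a: "C n < 0" and nc: "\<not> (\<exists>i \<le> nat \<lceil>- C n / dC\<rceil>. 0 \<le> C (n + i))"
  let ?k = "nat \<lceil>- C n / dC\<rceil>"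
  have "\<forall>i<?k. C (n + i) < 0" using nc by (meson less_imp_le not_le)
  then have "C (n + ?k) = min (C n + real ?k * dC) 0" using neg_run[where n=n and k="?k"] a by simp
  moreover have "- C n / dC \<le> real ?k" using a S(2) by (simp add: real_nat_ceiling_ge)
  then have "- C n \<le> real ?k * dC" using S(2) by (simp only: divide_le_eq minus_divide_left)
  ultimately have "C (n + ?k) = 0" by simp
  then show False using nc by auto
qed

lemma ste_ok: "0 \<le> C (n + slots_to_elig C n)"
proof -
  have "\<exists>k. 0 \<le> C (n + k)"
  proof (cases "C n < 0")
    case True then show ?thesis using elig_exists by blast
  next
    case False then show ?thesis by (intro exI[of _ 0]) simp
  qed
  then show ?thesis unfolding slots_to_elig_def by (rule LeastI_ex)
qed

lemma ste_bound: "C n < 0 \<Longrightarrow> real (slots_to_elig C n) \<le> of_int \<lceil>- C n / dC\<rceil>"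
proof -
  assume a: "C n < 0"
  obtain i where i: "i \<le> nat \<lceil>- C n / dC\<rceil>" "0 \<le> C (n + i)" using elig_exists[OF a] by blast
  have "slots_to_elig C n \<le> i" unfolding slots_to_elig_def by (rule Least_le) (rule i(2))
  then have "slots_to_elig C n \<le> nat \<lceil>- C n / dC\<rceil>" using i by linarith
  then have "real (slots_to_elig C n) \<le> real (nat \<lceil>- C n / dC\<rceil>)" by simp
  also have "\<dots> = of_int \<lceil>- C n / dC\<rceil>" using a S(2) by simp
  finally show ?thesis .
qed

lemma partB:
  assumes hyp: "\<forall>n. n0 + slots_to_elig C n0 \<le> n \<longrightarrow>
             (\<forall>m. n0 + slots_to_elig C n0 \<le> m \<and> m < n \<longrightarrow> \<not> rr_grant K rq u m) \<longrightarrow>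
             ready Q hfree retx n"
  shows "\<exists>j \<le> Emax div K. rr_grant K rq u (n0 + slots_to_elig C n0 + j)"
proof -
  define ne where "ne = n0 + slots_to_elig C n0"
  have Cnn: "(\<forall>m. ne \<le> m \<and> m < ne + j \<longrightarrow> \<not> rr_grant K rq u m) \<longrightarrow> 0 \<le> C (ne + j)" for j
  proof (induction j)
    case 0 then show ?case using ste_ok unfolding ne_def by simp
  next
    case (Suc j) then show ?case using nonneg_step[of "ne + j"] by auto
  qed
  have inv: "elig (ne + j) u" if "\<forall>m. ne \<le> m \<and> m < ne + j \<longrightarrow> u \<notin> set (take K (rq m))" for j
    using that Cnn[of j] hyp[rule_format, of "ne + j"] S(12)[of "ne + j"]
    unfolding rr_grant_def ne_def by auto
  have "elig (ne + 0) u" by (rule inv) auto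
  then have uin: "u \<in> set (rq ne)" using S(14) by auto
  have "length (takeWhile (\<lambda>w. w \<noteq> u) (rq ne)) \<le> card {w. w \<noteq> u \<and> elig ne w}"
  proof (rule tw_card[OF S(13)])
    show "set (takeWhile (\<lambda>w. w \<noteq> u) (rq ne)) \<subseteq> set (rq ne) - {u}"
      by (auto dest: set_takeWhileD)
    show "set (rq ne) - {u} \<subseteq> {w. w \<noteq> u \<and> elig ne w}" using S(14) by auto
  qed simp
  also have "\<dots> \<le> Emax" by (rule S(16))
  finally have bd: "length (takeWhile (\<lambda>w. w \<noteq> u) (rq ne)) \<le> Emax" .
  have "\<exists>j \<le> Emax div K. u \<in> set (take K (rq (ne + j)))"
    by (rule rr_bound[OF S(15) _ S(5) inv bd]) (use S(14) in auto)
  then show ?thesis unfolding rr_grant_def ne_def by blast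
qed


lemma ste_bound2: "0 \<le> M \<Longrightarrow> - C n \<le> M \<Longrightarrow> real (slots_to_elig C n) \<le> of_int \<lceil>M / dC\<rceil>"
proof (cases "C n < 0")
  case True
  assume "0 \<le> M" "- C n \<le> M"
  have "real (slots_to_elig C n) \<le> of_int \<lceil>- C n / dC\<rceil>" by (rule ste_bound[OF True])
  also have "\<dots> \<le> of_int \<lceil>M / dC\<rceil>"
  proof -
    have "- C n / dC \<le> M / dC" using \<open>- C n \<le> M\<close> S(2) by (metis divide_right_mono less_le minus_divide_left)
    then show ?thesis by (simp add: ceiling_mono)
  qed
  finally show ?thesis .
next
  case False
  assume "0 \<le> M" "- C n \<le> M"
  have "slots_to_elig C n = 0" unfolding slots_to_elig_def using False
    by (metis Least_eq_0 add_0_right not_less)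
  moreover have "0 \<le> M / dC" using \<open>0 \<le> M\<close> S(2) by simp
  ultimately show ?thesis by simp
qed

lemma partB2:
  assumes hyp: "\<forall>n. n0 + slots_to_elig C n0 \<le> n \<longrightarrow>
             (\<forall>m. n0 + slots_to_elig C n0 \<le> m \<and> m < n \<longrightarrow> \<not> rr_grant K rq u m) \<longrightarrow>
             ready Q hfree retx n"
  shows "(\<exists>k. rr_grant K rq u (n0 + slots_to_elig C n0 + k)) \<and>
      real (slots_to (rr_grant K rq u) (n0 + slots_to_elig C n0)) \<le> of_int \<lceil>real Emax / real K\<rceil> \<and>
      real (slots_to (rr_grant K rq u) n0) \<le> real (slots_to_elig C n0) + of_int \<lceil>real Emax / real K\<rceil>"
proof -
  obtain j where j: "j \<le> Emax div K" "rr_grant K rq u (n0 + slots_to_elig C n0 + j)"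
    using partB[OF hyp] by blast
  have e: "real j \<le> of_int \<lceil>real Emax / real K\<rceil>"
  proof -
    have "real j \<le> real (Emax div K)" using j by simp
    also have "\<dots> \<le> real Emax / real K" by (rule of_nat_div_le_of_nat)
    also have "\<dots> \<le> of_int \<lceil>real Emax / real K\<rceil>" by (rule le_of_int_ceiling)
    finally show ?thesis .
  qed
  have 1: "slots_to (rr_grant K rq u) (n0 + slots_to_elig C n0) \<le> j"
    unfolding slots_to_def by (rule Least_le) (rule j(2))
  have 2: "slots_to (rr_grant K rq u) n0 \<le> slots_to_elig C n0 + j"
    unfolding slots_to_def by (rule Least_le) (use j(2) in \<open>simp add: add.assoc\<close>)
  show ?thesis using j(2) 1 2 e by (auto intro: order_trans[of _ "real j"])
qed

end

theorem lemma2: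
  fixes u :: "'ue::finite"
  assumes sys: "rr_cbs_system Tslot dC lo hi K Emax v u C Q TBS D hfree retx elig rq"
  shows
  \<comment> \<open>(A) time to eligibility from any deficit\<close>
  "(\<forall>n0. C n0 < 0 \<longrightarrow>
      (\<exists>k. 0 \<le> C (n0 + k)) \<and>
      real (slots_to_elig C n0) * Tslot \<le> of_int \<lceil>- C n0 / dC\<rceil> * Tslot \<and>
      of_int \<lceil>- C n0 / dC\<rceil> * Tslot \<le> of_int \<lceil>- lo / dC\<rceil> * Tslot)
   \<and>
   \<comment> \<open>(B) time to first grant once eligible, and total time to first grant\<close>
   (\<forall>n0. (\<forall>n. n0 + slots_to_elig C n0 \<le> n \<longrightarrow>
             (\<forall>m. n0 + slots_to_elig C n0 \<le> m \<and> m < n \<longrightarrow> \<not> rr_grant K rq u m) \<longrightarrow>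
             ready Q hfree retx n) \<longrightarrow>
      (\<exists>k. rr_grant K rq u (n0 + slots_to_elig C n0 + k)) \<and>
      real (slots_to (rr_grant K rq u) (n0 + slots_to_elig C n0)) * Tslot
        \<le> of_int \<lceil>real Emax / real K\<rceil> * Tslot \<and>
      real (slots_to (rr_grant K rq u) n0) * Tslot
        \<le> real (slots_to_elig C n0) * Tslot + of_int \<lceil>real Emax / real K\<rceil> * Tslot)
   \<and>
   \<comment> \<open>(C) inter-grant separation; times measured from the post-grant slot\<close>
   (\<forall>ns Dmax. rr_grant K rq u ns \<and> D ns \<le> Dmax \<longrightarrow>
      C (Suc ns) \<ge> max lo (- Dmax) \<and>
      - C (Suc ns) \<le> min (- lo) Dmax \<and>
      real (slots_to_elig C (Suc ns)) * Tslot \<le> of_int \<lceil>min (- lo) Dmax / dC\<rceil> * Tslot \<and>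
      (Dmax \<le> - lo \<longrightarrow>
         real (slots_to_elig C (Suc ns)) * Tslot \<le> of_int \<lceil>Dmax / dC\<rceil> * Tslot) \<and>
      (- lo \<le> Dmax \<longrightarrow>
         real (slots_to_elig C (Suc ns)) * Tslot \<le> of_int \<lceil>- lo / dC\<rceil> * Tslot) \<and>
      ((\<forall>n. Suc ns + slots_to_elig C (Suc ns) \<le> n \<longrightarrow>
          (\<forall>m. Suc ns + slots_to_elig C (Suc ns) \<le> m \<and> m < n \<longrightarrow> \<not> rr_grant K rq u m) \<longrightarrow>
          ready Q hfree retx n) \<longrightarrow>
       real (slots_to (rr_grant K rq u) (Suc ns)) * Tslot
         \<le> real (slots_to_elig C (Suc ns)) * Tslot + of_int \<lceil>real Emax / real K\<rceil> * Tslot))"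
  proof -
  note T = S[OF sys]
  have A: "C n0 < 0 \<Longrightarrow> (\<exists>k. 0 \<le> C (n0 + k)) \<and>
      real (slots_to_elig C n0) * Tslot \<le> of_int \<lceil>- C n0 / dC\<rceil> * Tslot \<and>
      of_int \<lceil>- C n0 / dC\<rceil> * Tslot \<le> of_int \<lceil>- lo / dC\<rceil> * Tslot" for n0
  proof -
    assume a: "C n0 < 0"
    have 1: "\<exists>k. 0 \<le> C (n0 + k)" using elig_exists[OF sys a] by blast
    have 2: "real (slots_to_elig C n0) \<le> of_int \<lceil>- C n0 / dC\<rceil>" by (rule ste_bound[OF sys a])
    have "- C n0 / dC \<le> - lo / dC" using C_ge_lo[OF sys, of n0] T(2)
      by (metis divide_right_mono less_le minus_divide_left neg_le_iff_le)
    then have 3: "of_int \<lceil>- C n0 / dC\<rceil> \<le> (of_int \<lceil>- lo / dC\<rceil> :: real)" by (simp add: ceiling_mono)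
    show ?thesis using 1 2 3 T(1) by (auto intro: mult_right_mono)
  qed
  have B: "(\<exists>k. rr_grant K rq u (n0 + slots_to_elig C n0 + k)) \<and>
      real (slots_to (rr_grant K rq u) (n0 + slots_to_elig C n0)) * Tslot
        \<le> of_int \<lceil>real Emax / real K\<rceil> * Tslot \<and>
      real (slots_to (rr_grant K rq u) n0) * Tslot
        \<le> real (slots_to_elig C n0) * Tslot + of_int \<lceil>real Emax / real K\<rceil> * Tslot"
    if hyp: "\<forall>n. n0 + slots_to_elig C n0 \<le> n \<longrightarrow>
             (\<forall>m. n0 + slots_to_elig C n0 \<le> m \<and> m < n \<longrightarrow> \<not> rr_grant K rq u m) \<longrightarrow>
             ready Q hfree retx n" for n0
  proof -
    note P = partB2[OF sys hyp]
    have "real (slots_to (rr_grant K rq u) n0) * Tslot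
        \<le> (real (slots_to_elig C n0) + of_int \<lceil>real Emax / real K\<rceil>) * Tslot"
      using P T(1) by (intro mult_right_mono) auto
    then show ?thesis using P T(1) by (auto intro: mult_right_mono simp: distrib_right)
  qed
  have Cp: "C (Suc ns) \<ge> max lo (- Dmax) \<and>
      - C (Suc ns) \<le> min (- lo) Dmax \<and>
      real (slots_to_elig C (Suc ns)) * Tslot \<le> of_int \<lceil>min (- lo) Dmax / dC\<rceil> * Tslot \<and>
      (Dmax \<le> - lo \<longrightarrow>
         real (slots_to_elig C (Suc ns)) * Tslot \<le> of_int \<lceil>Dmax / dC\<rceil> * Tslot) \<and>
      (- lo \<le> Dmax \<longrightarrow>
         real (slots_to_elig C (Suc ns)) * Tslot \<le> of_int \<lceil>- lo / dC\<rceil> * Tslot)"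
    if g: "rr_grant K rq u ns" and dm: "D ns \<le> Dmax" for ns Dmax
  proof -
    have c0: "0 \<le> C ns" by (rule grant_nonneg[OF sys g])
    have d0: "0 \<le> D ns" by (rule D_nonneg[OF sys])
    have f0: "0 \<le> f_credit (C ns) dC (Q ns)" using c0 T(2) by (simp add: f_credit_def)
    have ge: "C (Suc ns) \<ge> max lo (- Dmax)" using T(11)[of ns] f0 dm d0 T(3,4) by auto
    then have le: "- C (Suc ns) \<le> min (- lo) Dmax" by auto
    have m0: "0 \<le> min (- lo) Dmax" using T(3) d0 dm by auto
    have b1: "real (slots_to_elig C (Suc ns)) \<le> of_int \<lceil>min (- lo) Dmax / dC\<rceil>"
      by (rule ste_bound2[OF sys m0 le])
    have b2: "Dmax \<le> - lo \<Longrightarrow> real (slots_to_elig C (Suc ns)) \<le> of_int \<lceil>Dmax / dC\<rceil>"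
      using b1 by (simp add: min_absorb2)
    have b3: "- lo \<le> Dmax \<Longrightarrow> real (slots_to_elig C (Suc ns)) \<le> of_int \<lceil>- lo / dC\<rceil>"
      using b1 by (simp add: min_absorb1)
    show ?thesis using ge le b1 b2 b3 T(1) by (auto intro: mult_right_mono)
  qed
  show ?thesis
    using A B Cp by blast
qed

end
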